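(* Let $0<\alpha<\delta<1$ and $t>0$. Then $$_{-\infty }I_{t}^{\alpha }\left\vert t\right\vert ^{-\delta }=\frac{\Gamma(\delta-\alpha)}{\Gamma(\delta)}\,\frac{\cos\left(\frac{\pi\delta}{2}-\pi\alpha\right)}{\cos\left(\frac{\pi\delta}{2}\right)}\,t^{\alpha-\delta},$$ that is, $$\frac{1}{\Gamma(\alpha)}\int_{-\infty}^{t}(t-\tau)^{\alpha-1}|\tau|^{-\delta}\,d\tau=\frac{\Gamma(\delta-\alpha)}{\Gamma(\delta)}\,\frac{\cos\left(\frac{\pi\delta}{2}-\pi\alpha\right)}{\cos\left(\frac{\pi\delta}{2}\right)}\,t^{\alpha-\delta}.$$
   Context: For $\alpha>0$ the Weyl fractional integral of a function $f$ is $_{-\infty }I_{t}^{\alpha }f(t)=\frac{1}{\Gamma(\alpha)}\int_{-\infty}^{t}(t-\tau)^{\alpha-1}f(\tau)\,d\tau$. Here $\Gamma$ is Euler's gamma function. *)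

theory Defs
  imports "HOL-Analysis.Analysis"
begin

text \<open>Weyl fractional integral of order alpha of f at t, as a Lebesgue integral over the
  half-line (-infinity, t]. Since the integrand may be singular at finitely many points,
  values at single points are irrelevant.\<close>
definition weyl_integral :: "real \<Rightarrow> (real \<Rightarrow> real) \<Rightarrow> real \<Rightarrow> real" where
  "weyl_integral \<alpha> f t =
     (1 / Gamma \<alpha>) * (LINT \<tau>:{..t}|lborel. (t - \<tau>) powr (\<alpha> - 1) * f \<tau>)"

end

theory Submission
  imports Defs
begin

lemma Gamma_reflection_real:
  fixes x :: real
  shows "Gamma x * Gamma (1 - x) = pi / sin (pi * x)"
proof -
  have "complex_of_real (Gamma x * Gamma (1 - x)) = complex_of_real (pi / sin (pi * x))"
    using Gamma_reflection_complex[of "complex_of_real x"]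
    by (simp add: Gamma_complex_of_real[symmetric] sin_of_real[symmetric])
  then show ?thesis using of_real_eq_iff by blast
qed

lemma trig_aux:
  fixes a d :: real
  shows "sin (pi * (d - a)) + sin (pi * a) = 2 * sin (pi * d / 2) * cos (pi * d / 2 - pi * a)"
    and "sin (pi * d) = 2 * sin (pi * d / 2) * cos (pi * d / 2)"
proof -
  have e1: "pi * (d - a) = pi * d / 2 + (pi * d / 2 - pi * a)" by (simp add: algebra_simps)
  have e2: "pi * a = pi * d / 2 - (pi * d / 2 - pi * a)" by (simp add: algebra_simps)
  show "sin (pi * (d - a)) + sin (pi * a) = 2 * sin (pi * d / 2) * cos (pi * d / 2 - pi * a)"
  proof -
    have g: "sin (x + y) + sin (x - y) = 2 * sin x * cos y" for x y :: real
      unfolding sin_add sin_diff by simp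
    show ?thesis using g[of "pi * d / 2" "pi * d / 2 - pi * a"] e1 e2 by simp
  qed
  have e3: "pi * d = pi * d / 2 + pi * d / 2" by simp
  show "sin (pi * d) = 2 * sin (pi * d / 2) * cos (pi * d / 2)"
    by (subst e3, unfold sin_add) simp
qed

lemma gamma_identity:
  fixes a d :: real
  assumes "0 < a" "a < d" "d < 1"
  shows "(1 / Gamma a) * (Beta (1 - d) a + Beta (1 - d) (d - a)) =
    Gamma (d - a) / Gamma d * (cos (pi * d / 2 - pi * a) / cos (pi * d / 2))"
proof -
  have sd: "sin (pi * d) > 0" using assms by (intro sin_gt_zero) auto
  have sda: "sin (pi * (d - a)) > 0" using assms by (intro sin_gt_zero) auto
  have sa: "sin (pi * a) > 0" using assms by (intro sin_gt_zero) auto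
  have sd2: "sin (pi * d / 2) > 0" using assms by (intro sin_gt_zero) auto
  have cd2: "cos (pi * d / 2) > 0" using assms by (intro cos_gt_zero) auto
  have ga: "Gamma a > 0" "Gamma d > 0" "Gamma (d - a) > 0" using assms by auto
  have R1: "Gamma (1 - d) = pi / (sin (pi * d) * Gamma d)"
    using Gamma_reflection_real[of d] ga sd by (simp add: field_simps)
  have R2: "Gamma (1 - d + a) = pi / (sin (pi * (d - a)) * Gamma (d - a))"
    using Gamma_reflection_real[of "d - a"] ga sda by (simp add: field_simps)
  have R3: "Gamma (1 - a) = pi / (sin (pi * a) * Gamma a)"
    using Gamma_reflection_real[of a] ga sa by (simp add: field_simps)
  have "(1 / Gamma a) * (Beta (1 - d) a + Beta (1 - d) (d - a)) =
     Gamma (d - a) / Gamma d * ((sin (pi * (d - a)) + sin (pi * a)) / sin (pi * d))"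
    unfolding Beta_def
  proof -
    have e: "1 - d + (d - a) = 1 - a" by simp
    show "1 / Gamma a * (Gamma (1 - d) * Gamma a / Gamma (1 - d + a) + Gamma (1 - d) * Gamma (d - a) / Gamma (1 - d + (d - a))) =
      Gamma (d - a) / Gamma d * ((sin (pi * (d - a)) + sin (pi * a)) / sin (pi * d))"
      unfolding e R1 R2 R3 using ga sd sda sa by (simp add: field_simps)
  qed
  also have "\<dots> = Gamma (d - a) / Gamma d * (cos (pi * d / 2 - pi * a) / cos (pi * d / 2))"
    using trig_aux(1)[of d a] trig_aux(2)[of d] sd2 cd2 by simp
  finally show ?thesis .
qed

lemma part1:
  fixes \<alpha> \<delta> t :: real
  assumes "0 < \<alpha>" and "\<alpha> < \<delta>" and "\<delta> < 1" and "0 < t"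
  shows "(\<lambda>\<tau>. (t - \<tau>) powr (\<alpha> - 1) * \<bar>\<tau>\<bar> powr (- \<delta>)) absolutely_integrable_on {0..t} \<and>
    integral {0..t} (\<lambda>\<tau>. (t - \<tau>) powr (\<alpha> - 1) * \<bar>\<tau>\<bar> powr (- \<delta>)) = t powr (\<alpha> - \<delta>) * Beta (1 - \<delta>) \<alpha>"
proof -
  define f where "f = (\<lambda>\<tau>. (t - \<tau>) powr (\<alpha> - 1) * \<bar>\<tau>\<bar> powr (- \<delta>))"
  define h where "h = (\<lambda>v. t powr (\<alpha> - \<delta>) * (v powr ((1 - \<delta>) - 1) * (1 - v) powr (\<alpha> - 1)))"
  have H: "(h has_integral t powr (\<alpha> - \<delta>) * Beta (1 - \<delta>) \<alpha>) {0..1}"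
    unfolding h_def using assms by (intro has_integral_mult_right has_integral_Beta_real) auto
  have eq: "\<bar>t\<bar> * f (t * v) = h v" if v: "v \<in> {0..1}" for v
  proof -
    have 1: "(t - t * v) powr (\<alpha>-1) = t powr (\<alpha>-1) * (1-v) powr (\<alpha>-1)"
      using v assms by (subst powr_mult[symmetric]) (auto simp: algebra_simps)
    have 2: "\<bar>t * v\<bar> powr (-\<delta>) = t powr (-\<delta>) * v powr (-\<delta>)"
      using v assms by (subst powr_mult[symmetric]) (auto simp: abs_mult)
    have 3: "t powr (\<alpha> - \<delta>) = t * (t powr (\<alpha>-1) * t powr (-\<delta>))"
    proof -
      have "t powr (\<alpha> - \<delta>) = t powr (1 + (\<alpha>-1) + (-\<delta>))" by simp
      also have "\<dots> = t * (t powr (\<alpha>-1) * t powr (-\<delta>))"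
        unfolding powr_add using assms by simp
      finally show ?thesis .
    qed
    show ?thesis unfolding f_def h_def 1 2 3 using assms by simp
  qed
  have H2: "((\<lambda>v. \<bar>t\<bar> * f (t * v)) has_integral t powr (\<alpha> - \<delta>) * Beta (1 - \<delta>) \<alpha>) {0..1}"
    by (rule has_integral_eq[OF _ H]) (use eq in auto)
  have A: "(\<lambda>v. \<bar>t\<bar> * f (t * v)) absolutely_integrable_on {0..1}"
    using H2 unfolding f_def by (intro nonnegative_absolutely_integrable_1) (auto simp: has_integral_integrable)
  have CV: "(\<lambda>x. \<bar>t\<bar> * f ((*) t x)) absolutely_integrable_on {0..1} \<and>
           integral {0..1} (\<lambda>x. \<bar>t\<bar> * f ((*) t x)) = t powr (\<alpha> - \<delta>) * Beta (1 - \<delta>) \<alpha>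
     \<longleftrightarrow> f absolutely_integrable_on ((*) t ` {0..1}) \<and> integral ((*) t ` {0..1}) f = t powr (\<alpha> - \<delta>) * Beta (1 - \<delta>) \<alpha>"
    by (rule has_absolute_integral_change_of_variables_1') (use assms in \<open>auto intro!: derivative_eq_intros inj_onI\<close>)
  have img: "(*) t ` {0..1} = {0..t}" using assms by auto
  have I: "integral {0..1} (\<lambda>v. \<bar>t\<bar> * f (t * v)) = t powr (\<alpha> - \<delta>) * Beta (1 - \<delta>) \<alpha>"
    by (rule integral_unique[OF H2])
  have "f absolutely_integrable_on ((*) t ` {0..1}) \<and> integral ((*) t ` {0..1}) f = t powr (\<alpha> - \<delta>) * Beta (1 - \<delta>) \<alpha>"
    using CV A I by blast
  then show ?thesis unfolding img f_def .
qed

lemma part2: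
  fixes \<alpha> \<delta> t :: real
  assumes "0 < \<alpha>" and "\<alpha> < \<delta>" and "\<delta> < 1" and "0 < t"
  shows "(\<lambda>\<tau>. (t - \<tau>) powr (\<alpha> - 1) * \<bar>\<tau>\<bar> powr (- \<delta>)) absolutely_integrable_on {..<0} \<and>
    integral {..<0} (\<lambda>\<tau>. (t - \<tau>) powr (\<alpha> - 1) * \<bar>\<tau>\<bar> powr (- \<delta>)) = t powr (\<alpha> - \<delta>) * Beta (1 - \<delta>) (\<delta> - \<alpha>)"
proof -
  define f where "f = (\<lambda>\<tau>. (t - \<tau>) powr (\<alpha> - 1) * \<bar>\<tau>\<bar> powr (- \<delta>))"
  define h where "h = (\<lambda>v. t powr (\<alpha> - \<delta>) * (v powr ((1 - \<delta>) - 1) * (1 - v) powr ((\<delta> - \<alpha>) - 1)))"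
  define g where "g = (\<lambda>v::real. - (t * v / (1 - v)))"
  define g' where "g' = (\<lambda>v::real. - (t / (1 - v)^2))"
  have H: "(h has_integral t powr (\<alpha> - \<delta>) * Beta (1 - \<delta>) (\<delta> - \<alpha>)) {0<..<1}"
    unfolding h_def has_integral_Icc_iff_Ioo[symmetric]
    using assms by (intro has_integral_mult_right has_integral_Beta_real) auto
  have eq: "\<bar>g' v\<bar> * f (g v) = h v" if v: "v \<in> {0<..<1}" for v
  proof -
    have p: "1 - v > 0" "v > 0" using v by auto
    have 1: "(t - g v) powr (\<alpha>-1) = t powr (\<alpha>-1) / (1-v) powr (\<alpha>-1)"
    proof -
      have "t - g v = t / (1 - v)" unfolding g_def using p by (simp add: field_simps)
      then show ?thesis by (simp add: powr_divide)
    qed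
    have 2: "\<bar>g v\<bar> powr (-\<delta>) = t powr (-\<delta>) * v powr (-\<delta>) / (1 - v) powr (-\<delta>)"
    proof -
      have "\<bar>g v\<bar> = t * v / (1 - v)" unfolding g_def using p assms by simp
      then show ?thesis using p assms by (simp add: powr_divide powr_mult)
    qed
    have 3: "\<bar>g' v\<bar> = t / (1 - v) powr 2" unfolding g'_def using p assms
      by (simp add: powr_realpow)
    have 4: "t powr (\<alpha> - \<delta>) = t * (t powr (\<alpha>-1) * t powr (-\<delta>))"
    proof -
      have "t powr (\<alpha> - \<delta>) = t powr (1 + (\<alpha>-1) + (-\<delta>))" by simp
      also have "\<dots> = t * (t powr (\<alpha>-1) * t powr (-\<delta>))"
        unfolding powr_add using assms by simp
      finally show ?thesis .
    qed
    have 5: "(1 - v) powr ((\<delta> - \<alpha>) - 1) * ((1 - v) powr 2 * (1 - v) powr (\<alpha>-1) * (1 - v) powr (-\<delta>)) = 1"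
    proof -
      have "(1 - v) powr ((\<delta> - \<alpha>) - 1) * ((1 - v) powr 2 * (1 - v) powr (\<alpha>-1) * (1 - v) powr (-\<delta>))
          = (1 - v) powr (((\<delta> - \<alpha>) - 1) + 2 + (\<alpha>-1) + (-\<delta>))"
        unfolding powr_add by (simp add: mult_ac)
      also have "\<dots> = 1" using p by simp
      finally show ?thesis .
    qed
    have pp: "(1 - v) powr 2 > 0" "(1 - v) powr (\<alpha>-1) > 0" "(1 - v) powr (-\<delta>) > 0" using p by auto
    show ?thesis unfolding f_def h_def 1 2 3 4 using pp 5
      by (simp add: field_simps)
  qed
  have H2: "((\<lambda>v. \<bar>g' v\<bar> * f (g v)) has_integral t powr (\<alpha> - \<delta>) * Beta (1 - \<delta>) (\<delta> - \<alpha>)) {0<..<1}"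
    by (rule has_integral_eq[OF _ H]) (use eq in auto)
  have A: "(\<lambda>v. \<bar>g' v\<bar> * f (g v)) absolutely_integrable_on {0<..<1}"
    using H2 unfolding f_def by (intro nonnegative_absolutely_integrable_1) (auto simp: has_integral_integrable)
  have der: "(g has_field_derivative g' v) (at v within {0<..<1})" if "v \<in> {0<..<1}" for v
  proof -
    have "v \<noteq> 1" using that by auto
    then show ?thesis unfolding g_def g'_def
      by (auto intro!: derivative_eq_intros simp: field_simps power2_eq_square)
  qed
  have inj: "inj_on g {0<..<1}"
  proof (rule inj_onI)
    fix x y :: real assume xy: "x \<in> {0<..<1}" "y \<in> {0<..<1}" "g x = g y"
    then have "t * x * (1 - y) = t * y * (1 - x)" unfolding g_def by (simp add: field_simps)
    then have "t * (x - y) = 0" by (simp add: algebra_simps)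
    then show "x = y" using assms by simp
  qed
  have CV: "(\<lambda>x. \<bar>g' x\<bar> * f (g x)) absolutely_integrable_on {0<..<1} \<and>
           integral {0<..<1} (\<lambda>x. \<bar>g' x\<bar> * f (g x)) = t powr (\<alpha> - \<delta>) * Beta (1 - \<delta>) (\<delta> - \<alpha>)
     \<longleftrightarrow> f absolutely_integrable_on (g ` {0<..<1}) \<and> integral (g ` {0<..<1}) f = t powr (\<alpha> - \<delta>) * Beta (1 - \<delta>) (\<delta> - \<alpha>)"
    by (rule has_absolute_integral_change_of_variables_1') (use der inj in auto)
  have img: "g ` {0<..<1} = {..<0}"
  proof
    show "g ` {0<..<1} \<subseteq> {..<0}" unfolding g_def using assms by auto
    show "{..<0} \<subseteq> g ` {0<..<1}"
    proof
      fix \<tau> :: real assume "\<tau> \<in> {..<0}"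
      then have tn: "\<tau> < 0" by simp
      define v where "v = - \<tau> / (t - \<tau>)"
      have v: "v \<in> {0<..<1}" unfolding v_def using tn assms by (auto simp: field_simps)
      have "g v = \<tau>" unfolding g_def v_def using tn assms by (simp add: field_simps)
      then show "\<tau> \<in> g ` {0<..<1}" using v by force
    qed
  qed
  have I: "integral {0<..<1} (\<lambda>v. \<bar>g' v\<bar> * f (g v)) = t powr (\<alpha> - \<delta>) * Beta (1 - \<delta>) (\<delta> - \<alpha>)"
    by (rule integral_unique[OF H2])
  have "f absolutely_integrable_on (g ` {0<..<1}) \<and> integral (g ` {0<..<1}) f = t powr (\<alpha> - \<delta>) * Beta (1 - \<delta>) (\<delta> - \<alpha>)"
    using CV A I by blast
  then show ?thesis unfolding img f_def .
qed

theorem theorem2: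
  fixes \<alpha> \<delta> t :: real
  assumes "0 < \<alpha>" and "\<alpha> < \<delta>" and "\<delta> < 1" and "0 < t"
  shows "set_integrable lborel {..t} (\<lambda>\<tau>. (t - \<tau>) powr (\<alpha> - 1) * \<bar>\<tau>\<bar> powr (- \<delta>)) \<and>
         weyl_integral \<alpha> (\<lambda>\<tau>. \<bar>\<tau>\<bar> powr (- \<delta>)) t =
           Gamma (\<delta> - \<alpha>) / Gamma \<delta> *
           (cos (pi * \<delta> / 2 - pi * \<alpha>) / cos (pi * \<delta> / 2)) * t powr (\<alpha> - \<delta>)"
proof -
  define f where "f = (\<lambda>\<tau>::real. (t - \<tau>) powr (\<alpha> - 1) * \<bar>\<tau>\<bar> powr (- \<delta>))"
  have P1: "f absolutely_integrable_on {0..t}" "integral {0..t} f = t powr (\<alpha> - \<delta>) * Beta (1 - \<delta>) \<alpha>"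
    using part1[OF assms] unfolding f_def by auto
  have P2: "f absolutely_integrable_on {..<0}" "integral {..<0} f = t powr (\<alpha> - \<delta>) * Beta (1 - \<delta>) (\<delta> - \<alpha>)"
    using part2[OF assms] unfolding f_def by auto
  have U: "{..<0} \<union> {0..t} = {..t}" using assms by auto
  have AU: "f absolutely_integrable_on {..t}"
    using absolutely_integrable_Un[OF P2(1) P1(1)] unfolding U .
  have HI: "(f has_integral (t powr (\<alpha> - \<delta>) * Beta (1 - \<delta>) (\<delta> - \<alpha>) + t powr (\<alpha> - \<delta>) * Beta (1 - \<delta>) \<alpha>)) {..t}"
  proof -
    have "(f has_integral (integral {..<0} f + integral {0..t} f)) ({..<0} \<union> {0..t})"
    proof (rule has_integral_Un)
      show "(f has_integral integral {..<0} f) {..<0}"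
        by (rule integrable_integral[OF set_lebesgue_integral_eq_integral(1)[OF P2(1)]])
      show "(f has_integral integral {0..t} f) {0..t}"
        by (rule integrable_integral[OF set_lebesgue_integral_eq_integral(1)[OF P1(1)]])
      have "{..<0} \<inter> {0..t} = ({}::real set)" by auto
      then show "negligible ({..<0} \<inter> {0..t::real})" by simp
    qed
    then show ?thesis unfolding U P1(2) P2(2) .
  qed
  have meas: "(\<lambda>x. indicator {..t} x *\<^sub>R f x) \<in> borel_measurable lborel"
    unfolding f_def by measurable
  have SI: "set_integrable lborel {..t} f"
    using AU meas unfolding set_integrable_def by (simp add: integrable_completion)
  have "(LINT \<tau>:{..t}|lborel. f \<tau>) = integral {..t} f"
    by (rule set_borel_integral_eq_integral(2)[OF SI])
  also have "\<dots> = t powr (\<alpha> - \<delta>) * (Beta (1 - \<delta>) \<alpha> + Beta (1 - \<delta>) (\<delta> - \<alpha>))"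
    using integral_unique[OF HI] by (simp add: algebra_simps)
  finally have L: "(LINT \<tau>:{..t}|lborel. f \<tau>) = t powr (\<alpha> - \<delta>) * (Beta (1 - \<delta>) \<alpha> + Beta (1 - \<delta>) (\<delta> - \<alpha>))" .
  have "weyl_integral \<alpha> (\<lambda>\<tau>. \<bar>\<tau>\<bar> powr (- \<delta>)) t = (1 / Gamma \<alpha>) * (LINT \<tau>:{..t}|lborel. f \<tau>)"
    unfolding weyl_integral_def f_def ..
  also have "\<dots> = ((1 / Gamma \<alpha>) * (Beta (1 - \<delta>) \<alpha> + Beta (1 - \<delta>) (\<delta> - \<alpha>))) * t powr (\<alpha> - \<delta>)"
    unfolding L by (simp add: algebra_simps)
  also have "\<dots> = Gamma (\<delta> - \<alpha>) / Gamma \<delta> *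
           (cos (pi * \<delta> / 2 - pi * \<alpha>) / cos (pi * \<delta> / 2)) * t powr (\<alpha> - \<delta>)"
    unfolding gamma_identity[OF assms(1-3)] ..
  finally show ?thesis using SI unfolding f_def by blast
qed

end
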